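(* For each $n\ge 4$, there exist connected graphs $G_1,G_2,G_3$, each of order $n$, such that $O_{\rm SR}(G_1)=\mathcal{M}$, $O_{\rm SR}(G_2)=\mathcal{N}$ and $O_{\rm SR}(G_3)=\mathcal{B}$.
   Context: All graphs are finite, simple and undirected. A set $S\subseteq V(G)$ is a strong resolving set of a connected graph $G$ if for all distinct $x,y\in V(G)$ there exists $z\in S$ such that $x$ lies on a $y$–$z$ geodesic or $y$ lies on an $x$–$z$ geodesic. The Maker–Breaker strong resolving game on $G$: Maker and Breaker alternately select a not-yet-chosen vertex of $G$; Maker wins if the vertices he selects contain a strong resolving set of $G$, Breaker wins otherwise. In the M-game Maker moves first, in the B-game Breaker moves first. $O_{\rm SR}(G)=\mathcal{M}$ if Maker has a winning strategy in both games, $\mathcal{B}$ if Breaker has a winning strategy in both, and $\mathcal{N}$ if the first player has a winning strategy in each. *)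

theory Defs
  imports Main
begin

definition simple_graph :: "'a set \<Rightarrow> ('a \<Rightarrow> 'a \<Rightarrow> bool) \<Rightarrow> bool" where
  "simple_graph V E \<longleftrightarrow> finite V \<and> (\<forall>x y. E x y \<longrightarrow> x \<in> V \<and> y \<in> V)
     \<and> (\<forall>x y. E x y \<longrightarrow> E y x) \<and> (\<forall>x. \<not> E x x)"

definition walk :: "'a set \<Rightarrow> ('a \<Rightarrow> 'a \<Rightarrow> bool) \<Rightarrow> 'a list \<Rightarrow> bool" where
  "walk V E xs \<longleftrightarrow> xs \<noteq> [] \<and> set xs \<subseteq> V \<and> successively E xs"

definition walk_betw :: "'a set \<Rightarrow> ('a \<Rightarrow> 'a \<Rightarrow> bool) \<Rightarrow> 'a \<Rightarrow> 'a \<Rightarrow> 'a list \<Rightarrow> bool" where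
  "walk_betw V E x y xs \<longleftrightarrow> walk V E xs \<and> hd xs = x \<and> last xs = y"

definition connected_graph :: "'a set \<Rightarrow> ('a \<Rightarrow> 'a \<Rightarrow> bool) \<Rightarrow> bool" where
  "connected_graph V E \<longleftrightarrow> simple_graph V E \<and> V \<noteq> {}
     \<and> (\<forall>x\<in>V. \<forall>y\<in>V. \<exists>xs. walk_betw V E x y xs)"

definition gdist :: "'a set \<Rightarrow> ('a \<Rightarrow> 'a \<Rightarrow> bool) \<Rightarrow> 'a \<Rightarrow> 'a \<Rightarrow> nat" where
  "gdist V E x y = (LEAST k. \<exists>xs. walk_betw V E x y xs \<and> length xs = Suc k)"

definition geodesic :: "'a set \<Rightarrow> ('a \<Rightarrow> 'a \<Rightarrow> bool) \<Rightarrow> 'a \<Rightarrow> 'a \<Rightarrow> 'a list \<Rightarrow> bool" where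
  "geodesic V E y z xs \<longleftrightarrow> walk_betw V E y z xs \<and> length xs = Suc (gdist V E y z)"

definition on_geodesic :: "'a set \<Rightarrow> ('a \<Rightarrow> 'a \<Rightarrow> bool) \<Rightarrow> 'a \<Rightarrow> 'a \<Rightarrow> 'a \<Rightarrow> bool" where
  "on_geodesic V E x y z \<longleftrightarrow> (\<exists>xs. geodesic V E y z xs \<and> x \<in> set xs)"

definition strong_resolving_set :: "'a set \<Rightarrow> ('a \<Rightarrow> 'a \<Rightarrow> bool) \<Rightarrow> 'a set \<Rightarrow> bool" where
  "strong_resolving_set V E S \<longleftrightarrow> S \<subseteq> V \<and>
     (\<forall>x\<in>V. \<forall>y\<in>V. x \<noteq> y \<longrightarrow>
        (\<exists>z\<in>S. on_geodesic V E x y z \<or> on_geodesic V E y x z))"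

definition maker_goal :: "'a set \<Rightarrow> ('a \<Rightarrow> 'a \<Rightarrow> bool) \<Rightarrow> 'a set \<Rightarrow> bool" where
  "maker_goal V E M \<longleftrightarrow> (\<exists>S\<subseteq>M. strong_resolving_set V E S)"

text \<open>Game positions: Maker's vertices M, Breaker's vertices B, and a flag which is
True iff it is Maker's turn.  maker_wins: Maker has a winning strategy from the
position; breaker_wins: Breaker has a winning strategy from the position.\<close>

inductive maker_wins :: "'a set \<Rightarrow> ('a \<Rightarrow> 'a \<Rightarrow> bool) \<Rightarrow> 'a set \<Rightarrow> 'a set \<Rightarrow> bool \<Rightarrow> bool"
  for V E where
  mw_goal: "maker_goal V E M \<Longrightarrow> maker_wins V E M B t"
| mw_maker: "x \<in> V - M - B \<Longrightarrow> maker_wins V E (insert x M) B False \<Longrightarrow> maker_wins V E M B True"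
| mw_breaker: "V - M - B \<noteq> {} \<Longrightarrow> (\<forall>x\<in>V - M - B. maker_wins V E M (insert x B) True)
     \<Longrightarrow> maker_wins V E M B False"

inductive breaker_wins :: "'a set \<Rightarrow> ('a \<Rightarrow> 'a \<Rightarrow> bool) \<Rightarrow> 'a set \<Rightarrow> 'a set \<Rightarrow> bool \<Rightarrow> bool"
  for V E where
  bw_end: "V - M - B = {} \<Longrightarrow> \<not> maker_goal V E M \<Longrightarrow> breaker_wins V E M B t"
| bw_breaker: "x \<in> V - M - B \<Longrightarrow> breaker_wins V E M (insert x B) True \<Longrightarrow> breaker_wins V E M B False"
| bw_maker: "V - M - B \<noteq> {} \<Longrightarrow> (\<forall>x\<in>V - M - B. breaker_wins V E (insert x M) B False)
     \<Longrightarrow> breaker_wins V E M B True"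

datatype outcome = Out_M | Out_N | Out_B

text \<open>O_SR(G) = o.  M-game: Maker moves first (flag True); B-game: Breaker first.\<close>
definition sr_outcome :: "'a set \<Rightarrow> ('a \<Rightarrow> 'a \<Rightarrow> bool) \<Rightarrow> outcome \<Rightarrow> bool" where
  "sr_outcome V E res \<longleftrightarrow> (case res of
      Out_M \<Rightarrow> maker_wins V E {} {} True \<and> maker_wins V E {} {} False
    | Out_B \<Rightarrow> breaker_wins V E {} {} True \<and> breaker_wins V E {} {} False
    | Out_N \<Rightarrow> maker_wins V E {} {} True \<and> breaker_wins V E {} {} False)"

end

theory Submission
  imports Defs
begin


lemma exists_geodesic:
  assumes "walk_betw V E y x ws"
  shows "\<exists>xs. geodesic V E y x xs"
proof -
  have ne: "ws \<noteq> []" using assms by (simp add: walk_betw_def walk_def)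
  have ex: "\<exists>k xs. walk_betw V E y x xs \<and> length xs = Suc k"
    using assms ne by (intro exI[of _ "length ws - 1"] exI[of _ ws]) auto
  show ?thesis using LeastI_ex[OF ex] unfolding geodesic_def gdist_def by blast
qed

lemma geo_min:
  assumes "geodesic V E y z xs" "walk_betw V E y z ys"
  shows "length xs \<le> length ys"
proof -
  have ne: "ys \<noteq> []" using assms by (simp add: walk_betw_def walk_def)
  have "gdist V E y z \<le> length ys - 1" unfolding gdist_def
    by (rule Least_le) (use assms(2) ne in auto)
  thus ?thesis using assms(1) ne unfolding geodesic_def by (cases ys) auto
qed

lemma geo2:
  assumes "E x y" "E y z" "x \<noteq> z" "\<not> E x z" "x \<in> V" "y \<in> V" "z \<in> V"
  shows "geodesic V E x z [x,y,z]"
proof -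
  have w: "walk_betw V E x z [x,y,z]" using assms by (simp add: walk_betw_def walk_def)
  have "gdist V E x z = 2" unfolding gdist_def
  proof (rule Least_equality)
    show "\<exists>xs. walk_betw V E x z xs \<and> length xs = Suc 2" using w by auto
  next
    fix k assume "\<exists>xs. walk_betw V E x z xs \<and> length xs = Suc k"
    then obtain xs where xs: "walk_betw V E x z xs" "length xs = Suc k" by blast
    show "2 \<le> k"
    proof (rule ccontr)
      assume "\<not> 2 \<le> k"
      then have "k = 0 \<or> k = 1" by auto
      then show False
      proof
        assume "k = 0" then obtain a where "xs = [a]" using xs(2) by (cases xs) auto
        then show False using xs(1) assms(3) by (auto simp: walk_betw_def)
      next
        assume "k = 1" then obtain a b where "xs = [a,b]" using xs(2)
          by (cases xs; cases "tl xs") auto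
        then show False using xs(1) assms(4) by (auto simp: walk_betw_def walk_def)
      qed
    qed
  qed
  thus ?thesis using w by (simp add: geodesic_def)
qed

lemma shortcut:
  assumes g: "geodesic V E y z xs" and x: "x \<in> set xs" "x \<noteq> y" "x \<noteq> z"
    and nb: "\<forall>v. E x v \<longrightarrow> v = y \<or> E y v" and yV: "y \<in> V"
  shows False
proof -
  obtain as bs where xs: "xs = as @ x # bs" using split_list[OF x(1)] by blast
  have wb: "walk_betw V E y z xs" using g by (simp add: geodesic_def)
  have asne: "as \<noteq> []" using wb xs x(2) by (cases as) (auto simp: walk_betw_def)
  have bsne: "bs \<noteq> []" using wb xs x(3) by (auto simp: walk_betw_def)
  then obtain v cs where bs: "bs = v # cs" by (cases bs) auto
  have succ: "successively E (as @ x # v # cs)" using wb xs bs by (simp add: walk_betw_def walk_def)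
  then have s2: "successively E (x # v # cs)" using asne
    by (simp add: successively_append_iff)
  then have Exv: "E x v" and s3: "successively E (v # cs)" by auto
  have setV: "set (v # cs) \<subseteq> V" using wb xs bs by (auto simp: walk_betw_def walk_def)
  have lastz: "last (v # cs) = z" using wb xs bs by (simp add: walk_betw_def)
  have lenxs: "length xs \<ge> length (v # cs) + 2" using xs bs asne by (cases as) auto
  from nb Exv have "v = y \<or> E y v" by blast
  then show False
  proof
    assume "v = y"
    then have "walk_betw V E y z (v # cs)" using s3 setV lastz by (simp add: walk_betw_def walk_def)
    from geo_min[OF g this] lenxs show False by simp
  next
    assume Eyv: "E y v"
    then have "walk_betw V E y z (y # v # cs)" using s3 setV lastz yV
      by (simp add: walk_betw_def walk_def)
    from geo_min[OF g this] lenxs show False by simp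
  qed
qed

lemma neg_generic:
  assumes "strong_resolving_set V E S" "x \<in> V" "y \<in> V" "x \<noteq> y" "x \<notin> S" "y \<notin> S"
    "\<forall>v. E x v \<longrightarrow> v = y \<or> E y v" "\<forall>v. E y v \<longrightarrow> v = x \<or> E x v"
  shows False
proof -
  obtain z where z: "z \<in> S" "on_geodesic V E x y z \<or> on_geodesic V E y x z"
    using assms(1-4) unfolding strong_resolving_set_def by blast
  from z(2) show False
  proof
    assume "on_geodesic V E x y z"
    then obtain xs where "geodesic V E y z xs" "x \<in> set xs" by (auto simp: on_geodesic_def)
    moreover have "x \<noteq> z" using assms(5) z(1) by blast
    ultimately show False using shortcut[of V E y z xs x] assms(3,4,7) by blast
  next
    assume "on_geodesic V E y x z"
    then obtain xs where "geodesic V E x z xs" "y \<in> set xs" by (auto simp: on_geodesic_def)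
    moreover have "y \<noteq> z" using assms(6) z(1) by blast
    ultimately show False using shortcut[of V E x z xs y] assms(2,4,8) by blast
  qed
qed

lemma pos_generic:
  assumes c: "connected_graph V E" and SV: "S \<subseteq> V"
    and h: "\<forall>x\<in>V. \<forall>y\<in>V. x \<noteq> y \<longrightarrow> x \<notin> S \<longrightarrow> y \<notin> S \<longrightarrow> (\<exists>z\<in>S.
        (E x y \<and> E y z \<and> \<not> E x z \<and> x \<noteq> z) \<or> (E y x \<and> E x z \<and> \<not> E y z \<and> y \<noteq> z))"
  shows "strong_resolving_set V E S"
proof -
  have cw: "\<forall>x\<in>V. \<forall>y\<in>V. \<exists>xs. walk_betw V E x y xs"
    using c unfolding connected_graph_def by (elim conjE)
  have self: "on_geodesic V E a b a" if ab: "a \<in> V" "b \<in> V" for a b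
  proof -
    have "\<exists>ws. walk_betw V E b a ws" using cw ab by simp
    then obtain ws where "walk_betw V E b a ws" by (elim exE)
    then obtain xs where g: "geodesic V E b a xs" using exists_geodesic by metis
    then have "xs \<noteq> []" "last xs = a" by (auto simp: geodesic_def walk_betw_def walk_def)
    then have "a \<in> set xs" by (metis last_in_set)
    then show ?thesis using g unfolding on_geodesic_def by (intro exI[of _ xs] conjI)
  qed
  show ?thesis unfolding strong_resolving_set_def
  proof (intro conjI SV ballI impI)
    fix x y assume xy: "x \<in> V" "y \<in> V" "x \<noteq> y"
    show "\<exists>z\<in>S. on_geodesic V E x y z \<or> on_geodesic V E y x z"
    proof (cases "x \<in> S")
      case True
      have "on_geodesic V E x y x" using self xy by simp
      then show ?thesis using True by (intro bexI[of _ x] disjI1)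
    next
      case xS: False
      show ?thesis
      proof (cases "y \<in> S")
        case True
        have "on_geodesic V E y x y" using self xy by simp
        then show ?thesis using True by (intro bexI[of _ y] disjI2)
      next
        case False
        have "\<exists>z\<in>S. (E x y \<and> E y z \<and> \<not> E x z \<and> x \<noteq> z) \<or> (E y x \<and> E x z \<and> \<not> E y z \<and> y \<noteq> z)"
          using h xy xS False by simp
        then obtain z where z: "z \<in> S" and
          d: "(E x y \<and> E y z \<and> \<not> E x z \<and> x \<noteq> z) \<or> (E y x \<and> E x z \<and> \<not> E y z \<and> y \<noteq> z)"
          by (elim bexE)
        have zV: "z \<in> V" using z SV by (rule subsetD[rotated])
        from d show ?thesis
        proof
          assume a: "E x y \<and> E y z \<and> \<not> E x z \<and> x \<noteq> z"
          have "geodesic V E x z [x,y,z]" using a by (intro geo2 xy(1,2) zV) simp_all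
          then have "on_geodesic V E y x z" unfolding on_geodesic_def by (intro exI[of _ "[x,y,z]"]) simp
          then show ?thesis using z by (intro bexI[of _ z] disjI2)
        next
          assume a: "E y x \<and> E x z \<and> \<not> E y z \<and> y \<noteq> z"
          have "geodesic V E y z [y,x,z]" using a by (intro geo2 xy(1,2) zV) simp_all
          then have "on_geodesic V E x y z" unfolding on_geodesic_def by (intro exI[of _ "[y,x,z]"]) simp
          then show ?thesis using z by (intro bexI[of _ z] disjI1)
        qed
      qed
    qed
  qed
qed

lemma pairing:
  assumes fin: "finite V" and inv: "\<forall>x. p (p x) = x" and fix0: "\<forall>x\<in>V. p x = x \<longrightarrow> x \<in> M0"
    and goal: "\<forall>M. M0 \<subseteq> M \<longrightarrow> M \<subseteq> V \<longrightarrow> (\<forall>x\<in>V. p x \<in> V \<longrightarrow> x \<in> M \<or> p x \<in> M) \<longrightarrow> maker_goal V E M"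
  shows "card (V - M - B) = k \<Longrightarrow> M0 \<subseteq> M \<Longrightarrow> M \<subseteq> V \<Longrightarrow> B \<subseteq> V \<Longrightarrow> M \<inter> B = {}
    \<Longrightarrow> (\<forall>x\<in>B. p x \<in> V \<longrightarrow> p x \<in> M) \<Longrightarrow> maker_wins V E M B True \<and> maker_wins V E M B False"
proof (induction k arbitrary: M B rule: less_induct)
  case (less k)
  note P = less.prems
  have finF: "finite (V - M - B)" using fin by simp
  show ?case
  proof (cases "V - M - B = {}")
    case True
    have "\<forall>x\<in>V. p x \<in> V \<longrightarrow> x \<in> M \<or> p x \<in> M"
    proof (intro ballI impI)
      fix x assume x: "x \<in> V" "p x \<in> V"
      show "x \<in> M \<or> p x \<in> M"
      proof (cases "x \<in> M")
        case False
        then have "x \<in> B" using True x(1) by blast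
        then show ?thesis using P(6) x(2) by simp
      qed simp
    qed
    then have "maker_goal V E M" using goal P(2,3) by simp
    then have g: "maker_wins V E M B t" for t by (rule mw_goal)
    show ?thesis using g g by (intro conjI)
  next
    case False
    have T: "maker_wins V E M B True"
    proof -
      obtain y where y: "y \<in> V - M - B" using False by blast
      have "V - insert y M - B = (V - M - B) - {y}" by blast
      then have c: "card (V - insert y M - B) < k" using card_Diff1_less[OF finF y] P(1) by simp
      have p2: "M0 \<subseteq> insert y M" using P(2) by blast
      have p3: "insert y M \<subseteq> V" using P(3) y by blast
      have p5: "insert y M \<inter> B = {}" using P(5) y by blast
      have p6: "\<forall>x\<in>B. p x \<in> V \<longrightarrow> p x \<in> insert y M" using P(6) by blast
      have "maker_wins V E (insert y M) B False" using less.IH[OF c refl p2 p3 P(4) p5 p6] by (rule conjunct2)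
      then show ?thesis using y by (intro mw_maker[of y]) 
    qed
    have F: "maker_wins V E M B False"
    proof (rule mw_breaker[OF False], intro ballI)
      fix x assume x: "x \<in> V - M - B"
      show "maker_wins V E M (insert x B) True"
      proof (cases "p x \<in> V \<and> p x \<notin> M")
        case True
        have "x \<notin> M0" using x P(2) by blast
        then have "p x \<noteq> x" using fix0 x by blast
        moreover have "p x \<notin> B"
        proof
          assume pxB: "p x \<in> B"
          have "p (p x) \<in> V" using inv x by simp
          then have "p (p x) \<in> M" using P(6) pxB by blast
          then show False using inv x by simp
        qed
        ultimately have px: "p x \<in> V - M - insert x B" using True by blast
        have sub: "V - insert (p x) M - insert x B \<subset> V - M - B" using x px by blast
        have c: "card (V - insert (p x) M - insert x B) < k"
          using psubset_card_mono[OF finF sub] P(1) by simp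
        have p2: "M0 \<subseteq> insert (p x) M" using P(2) by blast
        have p3: "insert (p x) M \<subseteq> V" using P(3) px by blast
        have p4: "insert x B \<subseteq> V" using P(4) x by blast
        have p5: "insert (p x) M \<inter> insert x B = {}" using P(5) px x by blast
        have p6: "\<forall>b\<in>insert x B. p b \<in> V \<longrightarrow> p b \<in> insert (p x) M" using P(6) by blast
        have "maker_wins V E (insert (p x) M) (insert x B) False"
          using less.IH[OF c refl p2 p3 p4 p5 p6] by (rule conjunct2)
        then show ?thesis using px by (intro mw_maker[of "p x"])
      next
        case False
        have sub: "V - M - insert x B \<subset> V - M - B" using x by blast
        have c: "card (V - M - insert x B) < k"
          using psubset_card_mono[OF finF sub] P(1) by simp
        have p4: "insert x B \<subseteq> V" using P(4) x by blast
        have p5: "M \<inter> insert x B = {}" using P(5) x by blast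
        have p6: "\<forall>b\<in>insert x B. p b \<in> V \<longrightarrow> p b \<in> M" using P(6) False by blast
        show ?thesis using less.IH[OF c refl P(2) P(3) p4 p5 p6] by (rule conjunct1)
      qed
    qed
    show ?thesis using T F by (intro conjI)
  qed
qed

lemma two_elems: "2 \<le> card B \<Longrightarrow> \<exists>x y. x \<in> B \<and> y \<in> B \<and> x \<noteq> y"
proof -
  assume h: "2 \<le> card B"
  then have fB: "finite B" by (metis card.infinite not_numeral_le_zero)
  have "B \<noteq> {}" using h by auto
  then obtain x where x: "x \<in> B" by blast
  have "card (B - {x}) \<ge> 1" using h x fB by (simp add: card_Diff_singleton)
  then have "B - {x} \<noteq> {}" by (metis card.empty not_one_le_zero)
  then obtain y where y: "y \<in> B - {x}" by blast
  show ?thesis using x y by blast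
qed

lemma counting:
  assumes fin: "finite V"
    and ng: "\<forall>M x y. x \<in> V \<longrightarrow> y \<in> V \<longrightarrow> x \<noteq> y \<longrightarrow> x \<notin> M \<longrightarrow> y \<notin> M \<longrightarrow> \<not> maker_goal V E M"
  shows "card (V - M - B) = k \<Longrightarrow> B \<subseteq> V \<Longrightarrow> M \<inter> B = {} \<Longrightarrow>
    (2 \<le> card B + (k+1) div 2 \<longrightarrow> breaker_wins V E M B False) \<and>
    (2 \<le> card B + k div 2 \<longrightarrow> breaker_wins V E M B True)"
proof (induction k arbitrary: M B rule: less_induct)
  case (less k)
  note P = less.prems
  have finF: "finite (V - M - B)" using fin by simp
  have finB: "finite B" using P(2) fin by (rule finite_subset)
  show ?case
  proof (cases "V - M - B = {}")
    case True
    then have k0: "k = 0" using P(1) by (metis card.empty)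
    have ng2: "\<not> maker_goal V E M" if c2: "2 \<le> card B"
    proof -
      obtain x y where xy: "x \<in> B" "y \<in> B" "x \<noteq> y" using two_elems[OF c2] by blast
      have "x \<in> V" "y \<in> V" "x \<notin> M" "y \<notin> M" using xy P(2,3) by blast+
      then show ?thesis using ng xy(3) by blast
    qed
    show ?thesis using k0 ng2 True by (simp add: bw_end)
  next
    case False
    then have kpos: "k > 0" using P(1) finF by auto
    obtain x0 where x0: "x0 \<in> V - M - B" using False by blast
    have c2gen: "card ((V - M - B) - {x}) = k - 1" if "x \<in> V - M - B" for x
      using that finF P(1) by (simp add: card_Diff_singleton)
    have F: "breaker_wins V E M B False" if h: "2 \<le> card B + (k+1) div 2"
    proof -
      have e: "V - M - insert x0 B = (V - M - B) - {x0}" by blast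
      have c2: "card (V - M - insert x0 B) = k - 1" using c2gen[OF x0] e by simp
      have c: "k - 1 < k" using kpos by simp
      have cb: "card (insert x0 B) = card B + 1" using x0 finB by simp
      have hh: "2 \<le> card (insert x0 B) + (k - 1) div 2" using h kpos cb by linarith
      have p2: "insert x0 B \<subseteq> V" using P(2) x0 by blast
      have p3: "M \<inter> insert x0 B = {}" using P(3) x0 by blast
      have "breaker_wins V E M (insert x0 B) True"
        using less.IH[OF c c2 p2 p3] hh by blast
      then show ?thesis using x0 by (intro bw_breaker[of x0])
    qed
    have T: "breaker_wins V E M B True" if h: "2 \<le> card B + k div 2"
    proof (rule bw_maker[OF False], intro ballI)
      fix x assume x: "x \<in> V - M - B"
      have e: "V - insert x M - B = (V - M - B) - {x}" by blast
      have c2: "card (V - insert x M - B) = k - 1" using c2gen[OF x] e by simp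
      have c: "k - 1 < k" using kpos by simp
      have hh: "2 \<le> card B + (k - 1 + 1) div 2" using h kpos by simp
      have p3: "insert x M \<inter> B = {}" using P(3) x by blast
      show "breaker_wins V E (insert x M) B False" using less.IH[OF c c2 P(2) p3] hh by blast
    qed
    show ?thesis using F T by blast
  qed
qed

lemma bw_any:
  assumes fin: "finite V"
  shows "card (V - M - B) = k \<Longrightarrow> M \<inter> B = {} \<Longrightarrow> (\<forall>M'. M' \<inter> B = {} \<longrightarrow> \<not> maker_goal V E M')
    \<Longrightarrow> breaker_wins V E M B True \<and> breaker_wins V E M B False"
proof (induction k arbitrary: M B rule: less_induct)
  case (less k)
  note P = less.prems
  have finF: "finite (V - M - B)" using fin by simp
  show ?case
  proof (cases "V - M - B = {}")
    case True
    have "\<not> maker_goal V E M" using P(2,3) by blast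
    then have g: "breaker_wins V E M B t" for t using True by (intro bw_end)
    show ?thesis using g g by (intro conjI)
  next
    case False
    have T: "breaker_wins V E M B True"
    proof (rule bw_maker[OF False], intro ballI)
      fix x assume x: "x \<in> V - M - B"
      have sub: "V - insert x M - B \<subset> V - M - B" using x by blast
      have c: "card (V - insert x M - B) < k"
        using psubset_card_mono[OF finF sub] P(1) by simp
      have p2: "insert x M \<inter> B = {}" using P(2) x by blast
      show "breaker_wins V E (insert x M) B False" using less.IH[OF c refl p2 P(3)] by (rule conjunct2)
    qed
    obtain x where x: "x \<in> V - M - B" using False by blast
    have sub: "V - M - insert x B \<subset> V - M - B" using x by blast
    have c: "card (V - M - insert x B) < k"
      using psubset_card_mono[OF finF sub] P(1) by simp
    have p2: "M \<inter> insert x B = {}" using P(2) x by blast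
    have p3: "\<forall>M'. M' \<inter> insert x B = {} \<longrightarrow> \<not> maker_goal V E M'" using P(3) by blast
    have "breaker_wins V E M (insert x B) True" using less.IH[OF c refl p2 p3] by (rule conjunct1)
    then have "breaker_wins V E M B False" using x by (intro bw_breaker[of x])
    then show ?thesis using T by (intro conjI)
  qed
qed

definition mp :: "nat \<Rightarrow> (nat \<Rightarrow> nat) \<Rightarrow> nat \<Rightarrow> nat \<Rightarrow> bool" where
  "mp n k x y \<longleftrightarrow> x < n \<and> y < n \<and> x \<noteq> y \<and> k x \<noteq> k y"

lemma mp_conn:
  assumes w: "\<forall>x<n. \<exists>w<n. k w \<noteq> k x" and n: "0 < n"
  shows "connected_graph {0..<n} (mp n k)"
  unfolding connected_graph_def
proof (intro conjI ballI)
  show "simple_graph {0..<n} (mp n k)" by (auto simp: simple_graph_def mp_def)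
  show "{0..<n} \<noteq> {}" using n by auto
  fix x y assume xy: "x \<in> {0..<n}" "y \<in> {0..<n}"
  show "\<exists>xs. walk_betw {0..<n} (mp n k) x y xs"
  proof (cases "k x = k y")
    case False
    then have "walk_betw {0..<n} (mp n k) x y [x,y]" using xy
      by (auto simp: walk_betw_def walk_def mp_def)
    then show ?thesis by blast
  next
    case True
    obtain v where v: "v < n" "k v \<noteq> k x" using w xy by auto
    then have "walk_betw {0..<n} (mp n k) x y [x,v,y]" using xy True
      by (auto simp: walk_betw_def walk_def mp_def)
    then show ?thesis by blast
  qed
qed

lemma mp_pos:
  assumes w: "\<forall>x<n. \<exists>w<n. k w \<noteq> k x" and n: "0 < n" and SV: "S \<subseteq> {0..<n}"
    and h: "\<forall>x<n. \<forall>y<n. x \<noteq> y \<longrightarrow> x \<notin> S \<longrightarrow> y \<notin> S \<longrightarrow> k x \<noteq> k y \<and> (\<exists>z\<in>S. k z = k x \<or> k z = k y)"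
  shows "strong_resolving_set {0..<n} (mp n k) S"
proof (rule pos_generic[OF mp_conn[OF w n] SV], intro ballI impI)
  fix x y assume xy: "x \<in> {0..<n}" "y \<in> {0..<n}" "x \<noteq> y" "x \<notin> S" "y \<notin> S"
  then have kd: "k x \<noteq> k y" and ez: "\<exists>z\<in>S. k z = k x \<or> k z = k y" using h by auto
  then obtain z where z: "z \<in> S" "k z = k x \<or> k z = k y" by blast
  have zn: "z < n" using z SV by auto
  have zx: "z \<noteq> x" "z \<noteq> y" using z xy by auto
  show "\<exists>z\<in>S. (mp n k x y \<and> mp n k y z \<and> \<not> mp n k x z \<and> x \<noteq> z) \<or>
              (mp n k y x \<and> mp n k x z \<and> \<not> mp n k y z \<and> y \<noteq> z)"
  proof (rule bexI[OF _ z(1)])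
    have xn: "x < n" "y < n" using xy by auto
    from z(2) show "(mp n k x y \<and> mp n k y z \<and> \<not> mp n k x z \<and> x \<noteq> z) \<or>
              (mp n k y x \<and> mp n k x z \<and> \<not> mp n k y z \<and> y \<noteq> z)"
    proof
      assume kz: "k z = k x"
      have "mp n k x y \<and> mp n k y z \<and> \<not> mp n k x z \<and> x \<noteq> z"
        unfolding mp_def using kz xn zn zx xy(3) kd by metis
      then show ?thesis by (rule disjI1)
    next
      assume kz: "k z = k y"
      have "mp n k y x \<and> mp n k x z \<and> \<not> mp n k y z \<and> y \<noteq> z"
        unfolding mp_def using kz xn zn zx xy(3) kd by metis
      then show ?thesis by (rule disjI2)
    qed
  qed
qed

lemma mp_neg:
  assumes "x < n" "y < n" "x \<noteq> y" "k x = k y" "x \<notin> S" "y \<notin> S"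
  shows "\<not> strong_resolving_set {0..<n} (mp n k) S"
proof
  assume r: "strong_resolving_set {0..<n} (mp n k) S"
  show False
    by (rule neg_generic[OF r, of x y]) (use assms in \<open>auto simp: mp_def\<close>)
qed

lemma kn_neg:
  assumes "x < n" "y < n" "x \<noteq> y" "x \<notin> S" "y \<notin> S"
  shows "\<not> strong_resolving_set {0..<n} (mp n id) S"
proof
  assume r: "strong_resolving_set {0..<n} (mp n id) S"
  have a1: "\<forall>v. mp n id x v \<longrightarrow> v = y \<or> mp n id y v"
    unfolding mp_def id_def using assms(2) by blast
  have a2: "\<forall>v. mp n id y v \<longrightarrow> v = x \<or> mp n id x v"
    unfolding mp_def id_def using assms(1) by blast
  have "x \<in> {0..<n}" "y \<in> {0..<n}" using assms(1,2) by simp_all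
  then show False using neg_generic[OF r _ _ assms(3-5) a1 a2] by blast
qed


definition k1 :: "nat \<Rightarrow> nat" where "k1 x = x div 2"
definition p1 :: "nat \<Rightarrow> nat" where "p1 x = (if even x then Suc x else x - 1)"
definition k2 :: "nat \<Rightarrow> nat" where "k2 x = (if x < 3 then 0 else (x - 3) div 2 + 1)"
definition p2 :: "nat \<Rightarrow> nat" where "p2 x = (if odd x then Suc x else x - 1)"

lemma p1_inv: "p1 (p1 x) = x" unfolding p1_def by auto
lemma p1_ne: "p1 x \<noteq> x" unfolding p1_def by (cases x) auto
lemma k1_p1: "k1 (p1 x) = k1 x" unfolding p1_def k1_def by (cases "even x") (auto elim: evenE oddE)
lemma k1_eq: "x \<noteq> y \<Longrightarrow> k1 x = k1 y \<Longrightarrow> y = p1 x" unfolding p1_def k1_def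
  by presburger
lemma p1_bound: "x < n \<Longrightarrow> y < n \<Longrightarrow> x \<noteq> y \<Longrightarrow> \<not> p1 x < n \<Longrightarrow> p1 y < n"
  unfolding p1_def by (auto split: if_splits)

lemma p2_inv: "p2 (p2 x) = x" unfolding p2_def by auto
lemma p2_fix: "p2 x = x \<Longrightarrow> x = 0" unfolding p2_def by (auto split: if_splits)
lemma k2_p2: "x \<ge> 3 \<Longrightarrow> k2 (p2 x) = k2 x" unfolding p2_def k2_def
  by (cases "even x") (auto elim!: evenE oddE, presburger+)
lemma k2_eq: "x \<noteq> y \<Longrightarrow> x \<noteq> 0 \<Longrightarrow> y \<noteq> 0 \<Longrightarrow> k2 x = k2 y \<Longrightarrow> y = p2 x" unfolding p2_def k2_def
  by (cases "even x") (auto elim!: evenE oddE split: if_splits, presburger+)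
lemma p2_bound: "x < n \<Longrightarrow> y < n \<Longrightarrow> x \<noteq> y \<Longrightarrow> \<not> p2 x < n \<Longrightarrow> p2 y < n"
  unfolding p2_def by (auto split: if_splits)



theorem mainTheorem4:
  fixes n :: nat
  assumes "n \<ge> 4"
  shows "\<exists>(V1::nat set) E1 (V2::nat set) E2 (V3::nat set) E3.
     connected_graph V1 E1 \<and> card V1 = n \<and> sr_outcome V1 E1 Out_M \<and>
     connected_graph V2 E2 \<and> card V2 = n \<and> sr_outcome V2 E2 Out_N \<and>
     connected_graph V3 E3 \<and> card V3 = n \<and> sr_outcome V3 E3 Out_B"
proof -
  have n0: "0 < n" using assms by simp
  let ?V = "{0..<n::nat}"
  have fin: "finite ?V" by simp
  \<comment> \<open>Graph 1: cocktail party (plus possibly a universal vertex)\<close>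
  have w1: "\<forall>x<n. \<exists>w<n. k1 w \<noteq> k1 x"
  proof (intro allI impI)
    fix x assume "x < n"
    show "\<exists>w<n. k1 w \<noteq> k1 x"
      using assms by (intro exI[of _ "if x < 2 then 2 else 0"]) (auto simp: k1_def)
  qed
  have goal1: "\<forall>M. {} \<subseteq> M \<longrightarrow> M \<subseteq> ?V \<longrightarrow> (\<forall>x\<in>?V. p1 x \<in> ?V \<longrightarrow> x \<in> M \<or> p1 x \<in> M)
      \<longrightarrow> maker_goal ?V (mp n k1) M"
  proof (intro allI impI)
    fix M assume MV: "M \<subseteq> ?V" and cov: "\<forall>x\<in>?V. p1 x \<in> ?V \<longrightarrow> x \<in> M \<or> p1 x \<in> M"
    have "strong_resolving_set ?V (mp n k1) M"
    proof (rule mp_pos[OF w1 n0 MV], intro allI impI conjI)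
      fix x y assume xy: "x < n" "y < n" "x \<noteq> y" "x \<notin> M" "y \<notin> M"
      show "k1 x \<noteq> k1 y"
      proof
        assume "k1 x = k1 y"
        then have "y = p1 x" using k1_eq xy by blast
        then show False using cov xy by auto
      qed
      show "\<exists>z\<in>M. k1 z = k1 x \<or> k1 z = k1 y"
      proof (cases "p1 x < n")
        case True then show ?thesis using cov xy k1_p1 by (intro bexI[of _ "p1 x"]) auto
      next
        case False
        then have "p1 y < n" using p1_bound xy by blast
        then show ?thesis using cov xy k1_p1 by (intro bexI[of _ "p1 y"]) auto
      qed
    qed
    then show "maker_goal ?V (mp n k1) M" unfolding maker_goal_def by blast
  qed
  have G1: "maker_wins ?V (mp n k1) {} {} True \<and> maker_wins ?V (mp n k1) {} {} False"
  proof -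
    have i1: "\<forall>x. p1 (p1 x) = x" by (simp add: p1_inv)
    have f1: "\<forall>x\<in>?V. p1 x = x \<longrightarrow> x \<in> {}" by (simp add: p1_ne)
    show ?thesis by (rule pairing[OF fin i1 f1 goal1, where M="{}" and B="{}" and k=n]) simp_all
  qed
  \<comment> \<open>Graph 2: K_n minus a triangle and a matching\<close>
  have w2: "\<forall>x<n. \<exists>w<n. k2 w \<noteq> k2 x"
  proof (intro allI impI)
    fix x assume "x < n"
    show "\<exists>w<n. k2 w \<noteq> k2 x"
      using assms by (intro exI[of _ "if x < 3 then 3 else 0"]) (auto simp: k2_def)
  qed
  have goal2: "\<forall>M. {0} \<subseteq> M \<longrightarrow> M \<subseteq> ?V \<longrightarrow> (\<forall>x\<in>?V. p2 x \<in> ?V \<longrightarrow> x \<in> M \<or> p2 x \<in> M)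
      \<longrightarrow> maker_goal ?V (mp n k2) M"
  proof (intro allI impI)
    fix M assume M0: "{0} \<subseteq> M" and MV: "M \<subseteq> ?V" and cov: "\<forall>x\<in>?V. p2 x \<in> ?V \<longrightarrow> x \<in> M \<or> p2 x \<in> M"
    have "strong_resolving_set ?V (mp n k2) M"
    proof (rule mp_pos[OF w2 n0 MV], intro allI impI conjI)
      fix x y assume xy: "x < n" "y < n" "x \<noteq> y" "x \<notin> M" "y \<notin> M"
      have x0: "x \<noteq> 0" "y \<noteq> 0" using xy M0 by (metis insert_subset)+
      show "k2 x \<noteq> k2 y"
      proof
        assume "k2 x = k2 y"
        then have "y = p2 x" using k2_eq xy x0 by blast
        then show False using cov xy by auto
      qed
      show "\<exists>z\<in>M. k2 z = k2 x \<or> k2 z = k2 y"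
      proof (cases "x < 3")
        case True then show ?thesis using M0 by (intro bexI[of _ 0]) (auto simp: k2_def)
      next
        case x3: False
        show ?thesis
        proof (cases "p2 x < n")
          case True then show ?thesis using cov xy k2_p2 x3 by (intro bexI[of _ "p2 x"]) auto
        next
          case False
          then have py: "p2 y < n" using p2_bound xy by blast
          show ?thesis
          proof (cases "y < 3")
            case True then show ?thesis using M0 by (intro bexI[of _ 0]) (auto simp: k2_def)
          next
            case False
            then show ?thesis using py cov xy k2_p2 by (intro bexI[of _ "p2 y"]) auto
          qed
        qed
      qed
    qed
    then show "maker_goal ?V (mp n k2) M" unfolding maker_goal_def by blast
  qed
  have "maker_wins ?V (mp n k2) {0} {} False"
  proof -
    have i2: "\<forall>x. p2 (p2 x) = x" by (simp add: p2_inv)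
    have f2: "\<forall>x\<in>?V. p2 x = x \<longrightarrow> x \<in> {0}" using p2_fix by blast
    have c: "card (?V - {0} - {}) = n - 1" using n0 by simp
    show ?thesis using pairing[OF fin i2 f2 goal2 c] n0 by simp
  qed
  then have G2a: "maker_wins ?V (mp n k2) {} {} True"
    using mw_maker[of 0 ?V "{}" "{}" "mp n k2"] n0 by auto
  have G2b: "breaker_wins ?V (mp n k2) {} {} False"
  proof -
    have ne: "?V - {} - {0} \<noteq> {}"
    proof -
      have "1 \<in> ?V - {} - {0}" using assms by simp
      then show ?thesis by blast
    qed
    have "breaker_wins ?V (mp n k2) {} {0} True"
    proof (rule bw_maker[OF ne], intro ballI)
      fix x assume x: "x \<in> ?V - {} - {0}"
      define y where "y = (if x = 1 then 2 else (1::nat))"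
      have y: "y \<in> ?V - {x} - {0}" using x assms by (auto simp: y_def)
      have ng: "\<forall>M'. M' \<inter> insert y {0} = {} \<longrightarrow> \<not> maker_goal ?V (mp n k2) M'"
      proof (intro allI impI notI)
        fix M' assume "M' \<inter> insert y {0} = {}" "maker_goal ?V (mp n k2) M'"
        then obtain S where S: "S \<subseteq> M'" "strong_resolving_set ?V (mp n k2) S"
          and "y \<notin> M'" "0 \<notin> M'" unfolding maker_goal_def by blast
        moreover have "k2 y = k2 0" "y < n" "y \<noteq> 0" using y by (auto simp: k2_def y_def)
        ultimately have "y \<notin> S" "0 \<notin> S" "k2 y = k2 0" "y < n" "0 < n" "y \<noteq> 0" using n0 by blast+
        then show False using mp_neg[of y n 0 k2 S] S(2) by blast
      qed
      have "breaker_wins ?V (mp n k2) (insert x {}) (insert y {0}) True"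
      proof -
        have d: "insert x {} \<inter> insert y {0} = {}" using x y by blast
        show ?thesis using bw_any[OF fin refl d ng] by (rule conjunct1)
      qed
      then show "breaker_wins ?V (mp n k2) (insert x {}) {0} False"
        using bw_breaker[of y ?V "insert x {}" "{0}"] y by auto
    qed
    then show ?thesis using bw_breaker[of 0 ?V "{}" "{}"] n0 by auto
  qed
  have w3: "\<forall>x<n. \<exists>w<n. id w \<noteq> id x"
  proof (intro allI impI)
    fix x assume "x < n"
    show "\<exists>w<n. id w \<noteq> id x"
      using assms by (intro exI[of _ "if x = 0 then 1 else 0"]) auto
  qed
  have ng3: "\<forall>M x y. x \<in> ?V \<longrightarrow> y \<in> ?V \<longrightarrow> x \<noteq> y \<longrightarrow> x \<notin> M \<longrightarrow> y \<notin> M \<longrightarrow> \<not> maker_goal ?V (mp n id) M"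
    using kn_neg unfolding maker_goal_def by (metis atLeastLessThan_iff in_mono)
  have G3: "breaker_wins ?V (mp n id) {} {} False \<and> breaker_wins ?V (mp n id) {} {} True"
    using counting[OF fin ng3, of "{}" "{}" n] assms by auto
  have conn1: "connected_graph ?V (mp n k1)" by (rule mp_conn[OF w1 n0])
  have conn2: "connected_graph ?V (mp n k2)" by (rule mp_conn[OF w2 n0])
  have conn3: "connected_graph ?V (mp n id)" by (rule mp_conn[OF w3 n0])
  have o1: "sr_outcome ?V (mp n k1) Out_M" using G1 by (simp add: sr_outcome_def)
  have o2: "sr_outcome ?V (mp n k2) Out_N" using G2a G2b by (simp add: sr_outcome_def)
  have o3: "sr_outcome ?V (mp n id) Out_B" using G3 by (simp add: sr_outcome_def)
  have cV: "card ?V = n" by simp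
  show ?thesis
    by (rule exI[of _ ?V], rule exI[of _ "mp n k1"], rule exI[of _ ?V], rule exI[of _ "mp n k2"],
        rule exI[of _ ?V], rule exI[of _ "mp n id"]) (intro conjI conn1 conn2 conn3 o1 o2 o3 cV)
qed

end
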